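(* Let $G$ be a finite group with subgroups $H$ and $K$, and let $\Omega_K$ be a left transversal of the normalizer $N_G(K)$ in $G$. Then the number of double cosets $HgK$ is $$|H\backslash G/K|=\sum_{l\in\Omega_K}\frac{[N_G(K):K]\cdot|lKl^{-1}\cap H|}{|H|}.$$
   Context: A left transversal of a subgroup is a set of representatives of its left cosets in $G$. *)

theory Defs
  imports Complex_Main "HOL-Algebra.Group_Action"
begin

definition double_cosets :: "('a, 'b) monoid_scheme \<Rightarrow> 'a set \<Rightarrow> 'a set \<Rightarrow> 'a set set" where
  "double_cosets G H K = {(H #>\<^bsub>G\<^esub> g) <#>\<^bsub>G\<^esub> K | g. g \<in> carrier G}"

definition left_transversal :: "('a, 'b) monoid_scheme \<Rightarrow> 'a set \<Rightarrow> 'a set \<Rightarrow> bool" where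
  "left_transversal G N \<Omega> \<longleftrightarrow> \<Omega> \<subseteq> carrier G \<and>
     (\<forall>g \<in> carrier G. \<exists>!l \<in> \<Omega>. l <#\<^bsub>G\<^esub> N = g <#\<^bsub>G\<^esub> N)"

end

theory Submission
  imports Defs
begin

context group begin

lemma canc1: "x \<in> carrier G \<Longrightarrow> y \<in> carrier G \<Longrightarrow> inv x \<otimes> (x \<otimes> y) = y"
  by (simp add: m_assoc[symmetric])
lemma canc2: "x \<in> carrier G \<Longrightarrow> y \<in> carrier G \<Longrightarrow> x \<otimes> (inv x \<otimes> y) = y"
  by (simp add: m_assoc[symmetric])

lemma dc_elem:
  assumes "g \<in> carrier G" "H \<subseteq> carrier G" "K \<subseteq> carrier G"
  shows "(H #> g) <#> K = {h \<otimes> g \<otimes> k | h k. h \<in> H \<and> k \<in> K}"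
  unfolding r_coset_def set_mult_def by auto

lemma conj_elem:
  assumes "l \<in> carrier G" "x \<in> carrier G" "K \<subseteq> carrier G"
  shows "x \<in> l <# K #> inv l \<longleftrightarrow> inv l \<otimes> x \<otimes> l \<in> K"
proof
  assume "x \<in> l <# K #> inv l"
  then obtain k where k: "k \<in> K" "x = l \<otimes> k \<otimes> inv l" unfolding l_coset_def r_coset_def by auto
  have "inv l \<otimes> x \<otimes> l = k" using k assms by (simp add: m_assoc subsetD canc1)
  then show "inv l \<otimes> x \<otimes> l \<in> K" using k by simp
next
  assume a: "inv l \<otimes> x \<otimes> l \<in> K"
  have "x = l \<otimes> (inv l \<otimes> x \<otimes> l) \<otimes> inv l" using assms by (simp add: m_assoc canc2)
  then show "x \<in> l <# K #> inv l" using a unfolding l_coset_def r_coset_def by blast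
qed

end

context group begin

lemma fibre_card:
  assumes H: "subgroup H G" and K: "subgroup K G" and g: "g \<in> carrier G"
    and h0: "h0 \<in> H" and k0: "k0 \<in> K"
  shows "card {p \<in> H \<times> K. fst p \<otimes> g \<otimes> snd p = h0 \<otimes> g \<otimes> k0} = card {h\<in>H. inv g \<otimes> h \<otimes> g \<in> K}"
proof -
  have HG: "\<And>x. x \<in> H \<Longrightarrow> x \<in> carrier G" by (rule subgroup.mem_carrier[OF H])
  have KG: "\<And>x. x \<in> K \<Longrightarrow> x \<in> carrier G" by (rule subgroup.mem_carrier[OF K])
  have h0G: "h0 \<in> carrier G" and k0G: "k0 \<in> carrier G" using HG[OF h0] KG[OF k0] by auto
  define f where "f x = (h0 \<otimes> x, inv g \<otimes> inv x \<otimes> g \<otimes> k0)" for x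
  define f' where "f' p = inv h0 \<otimes> fst p" for p :: "'a \<times> 'a"
  have "bij_betw f {h\<in>H. inv g \<otimes> h \<otimes> g \<in> K} {p \<in> H \<times> K. fst p \<otimes> g \<otimes> snd p = h0 \<otimes> g \<otimes> k0}"
  proof (rule bij_betw_byWitness[where f'=f'])
    show "\<forall>a\<in>{h \<in> H. inv g \<otimes> h \<otimes> g \<in> K}. f' (f a) = a"
    proof
      fix a assume "a \<in> {h \<in> H. inv g \<otimes> h \<otimes> g \<in> K}"
      then have aG: "a \<in> carrier G" using HG by blast
      show "f' (f a) = a" unfolding f_def f'_def using aG h0G by (simp add: canc1)
    qed
    show "\<forall>a'\<in>{p \<in> H \<times> K. fst p \<otimes> g \<otimes> snd p = h0 \<otimes> g \<otimes> k0}. f (f' a') = a'"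
    proof
      fix p assume p: "p \<in> {p \<in> H \<times> K. fst p \<otimes> g \<otimes> snd p = h0 \<otimes> g \<otimes> k0}"
      obtain h k where pe: "p = (h, k)" by (cases p)
      have hk: "h \<in> H" "k \<in> K" and E: "h \<otimes> g \<otimes> k = h0 \<otimes> g \<otimes> k0" using p pe by auto
      have hG: "h \<in> carrier G" and kG: "k \<in> carrier G" using hk HG KG by auto
      have 1: "inv g \<otimes> inv h \<otimes> (h \<otimes> g \<otimes> k) = k" using hG kG g by (simp add: m_assoc canc1)
      have 2: "inv g \<otimes> inv (inv h0 \<otimes> h) \<otimes> g \<otimes> k0 = inv g \<otimes> inv h \<otimes> (h0 \<otimes> g \<otimes> k0)"
        using hG g h0G k0G by (simp add: inv_mult_group m_assoc)
      have 3: "h0 \<otimes> (inv h0 \<otimes> h) = h" using hG h0G by (simp add: canc2)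
      have "f (f' (h, k)) = (h, k)" unfolding f_def f'_def fst_conv
        using 1 2 3 E by simp
      then show "f (f' p) = p" using pe by simp
    qed
    show "f ` {h \<in> H. inv g \<otimes> h \<otimes> g \<in> K} \<subseteq> {p \<in> H \<times> K. fst p \<otimes> g \<otimes> snd p = h0 \<otimes> g \<otimes> k0}"
    proof
      fix p assume "p \<in> f ` {h \<in> H. inv g \<otimes> h \<otimes> g \<in> K}"
      then obtain x where x: "x \<in> H" "inv g \<otimes> x \<otimes> g \<in> K" and pe: "p = f x" by blast
      have xG: "x \<in> carrier G" using x HG by auto
      have "inv (inv g \<otimes> x \<otimes> g) \<in> K" by (rule subgroup.m_inv_closed[OF K x(2)])
      moreover have "inv (inv g \<otimes> x \<otimes> g) = inv g \<otimes> inv x \<otimes> g"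
        using xG g by (simp add: inv_mult_group m_assoc)
      ultimately have a: "inv g \<otimes> inv x \<otimes> g \<in> K" by simp
      have c1: "h0 \<otimes> x \<in> H" using subgroup.m_closed[OF H h0 x(1)] .
      have c2: "inv g \<otimes> inv x \<otimes> g \<otimes> k0 \<in> K" using subgroup.m_closed[OF K a k0] .
      have "h0 \<otimes> x \<otimes> g \<otimes> (inv g \<otimes> inv x \<otimes> g \<otimes> k0) = h0 \<otimes> (x \<otimes> (g \<otimes> (inv g \<otimes> (inv x \<otimes> (g \<otimes> k0)))))"
        using xG g h0G k0G by (simp add: m_assoc)
      also have "\<dots> = h0 \<otimes> (x \<otimes> (inv x \<otimes> (g \<otimes> k0)))"
        using xG g h0G k0G by (simp only: canc2 inv_closed m_closed)
      also have "\<dots> = h0 \<otimes> (g \<otimes> k0)"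
        using xG g h0G k0G by (simp only: canc2 inv_closed m_closed)
      also have "\<dots> = h0 \<otimes> g \<otimes> k0"
        using g h0G k0G by (simp add: m_assoc)
      finally have c3: "h0 \<otimes> x \<otimes> g \<otimes> (inv g \<otimes> inv x \<otimes> g \<otimes> k0) = h0 \<otimes> g \<otimes> k0" .
      show "p \<in> {p \<in> H \<times> K. fst p \<otimes> g \<otimes> snd p = h0 \<otimes> g \<otimes> k0}"
        unfolding pe f_def using c1 c2 c3 by simp
    qed
    show "f' ` {p \<in> H \<times> K. fst p \<otimes> g \<otimes> snd p = h0 \<otimes> g \<otimes> k0} \<subseteq> {h \<in> H. inv g \<otimes> h \<otimes> g \<in> K}"
    proof
      fix y assume "y \<in> f' ` {p \<in> H \<times> K. fst p \<otimes> g \<otimes> snd p = h0 \<otimes> g \<otimes> k0}"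
      then obtain h k where hk: "h \<in> H" "k \<in> K" and E: "h \<otimes> g \<otimes> k = h0 \<otimes> g \<otimes> k0"
        and ye: "y = inv h0 \<otimes> h" unfolding f'_def by auto
      have hG: "h \<in> carrier G" and kG: "k \<in> carrier G" using hk HG KG by auto
      have yH: "y \<in> H" unfolding ye
        using subgroup.m_closed[OF H subgroup.m_inv_closed[OF H h0] hk(1)] .
      have "h \<otimes> g = h \<otimes> g \<otimes> k \<otimes> inv k" using hG kG g by (simp add: m_assoc)
      also have "\<dots> = h0 \<otimes> g \<otimes> k0 \<otimes> inv k" using E by simp
      finally have e: "h \<otimes> g = h0 \<otimes> g \<otimes> k0 \<otimes> inv k" .
      have "inv g \<otimes> y \<otimes> g = inv g \<otimes> inv h0 \<otimes> (h \<otimes> g)"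
        using hG g h0G unfolding ye by (simp add: m_assoc)
      also have "\<dots> = k0 \<otimes> inv k" unfolding e using g h0G k0G kG by (simp add: m_assoc canc1)
      finally have "inv g \<otimes> y \<otimes> g = k0 \<otimes> inv k" .
      moreover have "k0 \<otimes> inv k \<in> K" using subgroup.m_closed[OF K k0 subgroup.m_inv_closed[OF K hk(2)]] .
      ultimately show "y \<in> {h \<in> H. inv g \<otimes> h \<otimes> g \<in> K}" using yH by simp
    qed
  qed
  then show ?thesis by (simp add: bij_betw_same_card)
qed

end

context group begin

lemma dc_card:
  assumes H: "subgroup H G" and K: "subgroup K G" and g: "g \<in> carrier G" and fin: "finite (carrier G)"
  shows "card H * card K = card ((H #> g) <#> K) * card {h\<in>H. inv g \<otimes> h \<otimes> g \<in> K}"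
proof -
  have HG: "H \<subseteq> carrier G" "K \<subseteq> carrier G" using subgroup.subset[OF H] subgroup.subset[OF K] by auto
  have finH: "finite H" "finite K" using HG fin finite_subset by auto
  let ?m = "\<lambda>p. fst p \<otimes> g \<otimes> snd p"
  have img: "?m ` (H \<times> K) = (H #> g) <#> K"
    unfolding dc_elem[OF g HG] by force
  have "card (H \<times> K) = (\<Sum>y\<in>?m ` (H \<times> K). \<Sum>x\<in>{x\<in>H \<times> K. ?m x = y}. 1)"
    using sum.group[of "H \<times> K" "?m ` (H \<times> K)" ?m "\<lambda>_. (1::nat)"] finH by simp
  also have "\<dots> = (\<Sum>y\<in>?m ` (H \<times> K). card {h\<in>H. inv g \<otimes> h \<otimes> g \<in> K})"
  proof (rule sum.cong[OF refl])
    fix y assume "y \<in> ?m ` (H \<times> K)"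
    then obtain h0 k0 where "h0 \<in> H" "k0 \<in> K" "y = h0 \<otimes> g \<otimes> k0" by auto
    then show "(\<Sum>x\<in>{x\<in>H \<times> K. ?m x = y}. 1) = card {h\<in>H. inv g \<otimes> h \<otimes> g \<in> K}"
      using fibre_card[OF H K g] by simp
  qed
  finally show ?thesis by (simp add: card_cartesian_product img)
qed

lemma dc_self:
  assumes H: "subgroup H G" and K: "subgroup K G" and g: "g \<in> carrier G"
  shows "g \<in> (H #> g) <#> K"
proof -
  have HG: "H \<subseteq> carrier G" "K \<subseteq> carrier G" using subgroup.subset[OF H] subgroup.subset[OF K] by auto
  have "g = \<one> \<otimes> g \<otimes> \<one>" using g by simp
  then show ?thesis unfolding dc_elem[OF g HG]
    using subgroup.one_closed[OF H] subgroup.one_closed[OF K] by blast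
qed

lemma dc_repr:
  assumes H: "subgroup H G" and K: "subgroup K G" and g: "g \<in> carrier G"
    and x: "x \<in> (H #> g) <#> K"
  shows "(H #> x) <#> K = (H #> g) <#> K"
proof -
  have HG: "H \<subseteq> carrier G" "K \<subseteq> carrier G" using subgroup.subset[OF H] subgroup.subset[OF K] by auto
  obtain h0 k0 where hk0: "h0 \<in> H" "k0 \<in> K" "x = h0 \<otimes> g \<otimes> k0"
    using x unfolding dc_elem[OF g HG] by blast
  have h0G: "h0 \<in> carrier G" and k0G: "k0 \<in> carrier G" using hk0 HG by auto
  have xG: "x \<in> carrier G" using hk0 h0G k0G g by simp
  show ?thesis unfolding dc_elem[OF g HG] dc_elem[OF xG HG]
  proof safe
    fix h k assume hk: "h \<in> H" "k \<in> K"
    have "h \<otimes> x \<otimes> k = (h \<otimes> h0) \<otimes> g \<otimes> (k0 \<otimes> k)"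
      using hk HG h0G k0G g by (simp add: hk0 m_assoc subsetD)
    moreover have "h \<otimes> h0 \<in> H" "k0 \<otimes> k \<in> K" using subgroup.m_closed[OF H hk(1) hk0(1)] subgroup.m_closed[OF K hk0(2) hk(2)] by auto
    ultimately show "\<exists>h' k'. h \<otimes> x \<otimes> k = h' \<otimes> g \<otimes> k' \<and> h' \<in> H \<and> k' \<in> K" by blast
  next
    fix h k assume hk: "h \<in> H" "k \<in> K"
    have hG: "h \<in> carrier G" "k \<in> carrier G" using hk HG by auto
    have "h \<otimes> g \<otimes> k = (h \<otimes> inv h0) \<otimes> x \<otimes> (inv k0 \<otimes> k)"
      using hG h0G k0G g by (simp add: hk0 m_assoc canc1 canc2)
    moreover have "h \<otimes> inv h0 \<in> H" "inv k0 \<otimes> k \<in> K" using subgroup.m_closed[OF H hk(1) subgroup.m_inv_closed[OF H hk0(1)]] subgroup.m_closed[OF K subgroup.m_inv_closed[OF K hk0(2)] hk(2)] by auto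
    ultimately show "\<exists>h' k'. h \<otimes> g \<otimes> k = h' \<otimes> x \<otimes> k' \<and> h' \<in> H \<and> k' \<in> K" by blast
  qed
qed

end

theorem lemma3p3:
  fixes G (structure) and H K \<Omega> :: "'a set"
  assumes "group G" and "finite (carrier G)"
    and "subgroup H G" and "subgroup K G"
    and "left_transversal G (normalizer G K) \<Omega>"
  shows "real (card (double_cosets G H K)) =
    (\<Sum>l\<in>\<Omega>. (real (card (normalizer G K)) / real (card K)) *
              real (card ((l <# K #> inv l) \<inter> H)) / real (card H))"
proof -
  interpret group G by fact
  note fin = assms(2) and H = assms(3) and K = assms(4)
  have HG: "H \<subseteq> carrier G" "K \<subseteq> carrier G" using subgroup.subset[OF H] subgroup.subset[OF K] by auto
  have finH: "finite H" "finite K" using HG fin finite_subset by auto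
  have cardpos: "card H > 0" "card K > 0" using finH subgroup.one_closed[OF H] subgroup.one_closed[OF K] card_gt_0_iff by blast+
  define N where "N = normalizer G K"
  have N: "subgroup N G" unfolding N_def by (rule normalizer_imp_subgroup[OF HG(2)])
  have NG: "N \<subseteq> carrier G" using subgroup.subset[OF N] by auto
  have Ncon: "n <# K #> inv n = K" if "n \<in> N" for n
    using that HG unfolding N_def normalizer_def stabilizer_def by auto
  have Ninv: "inv n \<otimes> x \<otimes> n \<in> K \<longleftrightarrow> x \<in> K" if "n \<in> N" "x \<in> carrier G" for n x
    using conj_elem[of n x K] Ncon[OF that(1)] that NG HG by auto
  define S where "S g = {h\<in>H. inv g \<otimes> h \<otimes> g \<in> K}" for g
  define D where "D g = (H #> g) <#> K" for g
  have S_eq: "S l = (l <# K #> inv l) \<inter> H" if "l \<in> carrier G" for l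
    unfolding S_def using conj_elem[OF that _ HG(2)] HG by auto
  have S_N: "S (l \<otimes> n) = S l" if "l \<in> carrier G" "n \<in> N" for l n
  proof -
    have nG: "n \<in> carrier G" using that NG by auto
    have "inv (l \<otimes> n) \<otimes> h \<otimes> (l \<otimes> n) \<in> K \<longleftrightarrow> inv l \<otimes> h \<otimes> l \<in> K" if "h \<in> H" for h
    proof -
      have hG: "h \<in> carrier G" using that HG by auto
      have "inv (l \<otimes> n) \<otimes> h \<otimes> (l \<otimes> n) = inv n \<otimes> (inv l \<otimes> h \<otimes> l) \<otimes> n"
        using hG nG \<open>l \<in> carrier G\<close> by (simp add: inv_mult_group m_assoc)
      then show ?thesis using Ninv[OF \<open>n \<in> N\<close>] hG nG \<open>l \<in> carrier G\<close> by simp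
    qed
    then show ?thesis unfolding S_def by auto
  qed
  have finS: "finite (S g)" for g using finH unfolding S_def by auto
  have DsubG: "D g \<subseteq> carrier G" if "g \<in> carrier G" for g
    unfolding D_def by (rule setmult_subset_G[OF r_coset_subset_G[OF HG(1) that] HG(2)])
  have finD: "finite (D g)" if "g \<in> carrier G" for g
    by (rule finite_subset[OF DsubG[OF that] fin])
  have Dcard: "real (card H * card K) = real (card (D g)) * real (card (S g))" if "g \<in> carrier G" for g
    using dc_card[OF H K that fin] unfolding D_def S_def by simp
  have Spos: "card (S g) > 0" if "g \<in> carrier G" for g
  proof -
    have "\<one> \<in> S g" unfolding S_def using that subgroup.one_closed[OF H] subgroup.one_closed[OF K] by (auto simp: canc1)
    then show ?thesis using finS[of g] card_gt_0_iff by blast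
  qed
  have Dpos: "card (D g) > 0" if "g \<in> carrier G" for g
    using finD[OF that] dc_self[OF H K that] unfolding D_def by (auto simp: card_gt_0_iff)
  have DC: "double_cosets G H K = D ` carrier G" unfolding double_cosets_def D_def by auto
  have step1: "real (card (double_cosets G H K)) = (\<Sum>g\<in>carrier G. 1 / real (card (D g)))"
  proof -
    have "(\<Sum>g\<in>carrier G. 1 / real (card (D g))) =
          (\<Sum>E\<in>D ` carrier G. \<Sum>g\<in>{x\<in>carrier G. D x = E}. 1 / real (card (D g)))"
      using sum.group[of "carrier G" "D ` carrier G" D "\<lambda>g. 1 / real (card (D g))"] fin by simp
    also have "\<dots> = (\<Sum>E\<in>D ` carrier G. 1)"
    proof (rule sum.cong[OF refl])
      fix E assume "E \<in> D ` carrier G"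
      then obtain g where g: "g \<in> carrier G" "E = D g" by auto
      have set: "{x\<in>carrier G. D x = E} = D g"
      proof (intro equalityI subsetI)
        fix x assume "x \<in> {x\<in>carrier G. D x = E}"
        then show "x \<in> D g" using dc_self[OF H K, of x] g unfolding D_def by auto
      next
        fix x assume x: "x \<in> D g"
        have xG: "x \<in> carrier G" using x DsubG[OF g(1)] by blast
        moreover have "D x = E" using dc_repr[OF H K g(1)] x g unfolding D_def by auto
        ultimately show "x \<in> {x\<in>carrier G. D x = E}" by simp
      qed
      have "(\<Sum>x\<in>D g. 1 / real (card (D x))) = (\<Sum>x\<in>D g. 1 / real (card (D g)))"
      proof (rule sum.cong[OF refl])
        fix x assume x: "x \<in> D g"
        then show "1 / real (card (D x)) = 1 / real (card (D g))"
          using dc_repr[OF H K g(1)] unfolding D_def by auto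
      qed
      also have "\<dots> = 1" using Dpos[OF g(1)] by simp
      finally show "(\<Sum>x\<in>{x\<in>carrier G. D x = E}. 1 / real (card (D x))) = 1" unfolding set .
    qed
    finally show ?thesis unfolding DC by simp
  qed
  also have "\<dots> = (\<Sum>g\<in>carrier G. real (card (S g))) / (real (card H) * real (card K))"
    unfolding sum_divide_distrib
  proof (rule sum.cong[OF refl])
    fix g assume g: "g \<in> carrier G"
    show "1 / real (card (D g)) = real (card (S g)) / (real (card H) * real (card K))"
      using Dcard[OF g] Dpos[OF g] Spos[OF g] cardpos by (simp add: field_simps)
  qed
  also have "(\<Sum>g\<in>carrier G. real (card (S g))) = (\<Sum>l\<in>\<Omega>. real (card N) * real (card (S l)))"
  proof -
    have T: "\<Omega> \<subseteq> carrier G" "\<And>g. g \<in> carrier G \<Longrightarrow> \<exists>!l. l \<in> \<Omega> \<and> l <# N = g <# N"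
      using assms(5) unfolding left_transversal_def N_def by blast+
    have finO: "finite \<Omega>" using T(1) fin finite_subset by auto
    define \<rho> where "\<rho> g = (THE l. l \<in> \<Omega> \<and> l <# N = g <# N)" for g
    have rho: "\<rho> g \<in> \<Omega> \<and> \<rho> g <# N = g <# N" if "g \<in> carrier G" for g
      unfolding \<rho>_def using theI'[OF T(2)[OF that]] .
    have rho_eq: "\<rho> g = l" if "g \<in> carrier G" "l \<in> \<Omega>" "l <# N = g <# N" for g l
      unfolding \<rho>_def using T(2)[OF that(1)] that(2,3) by (metis (mono_tags, lifting) the_equality)
    have self: "g \<in> g <# N" if "g \<in> carrier G" for g
    proof -
      have "g = g \<otimes> \<one>" using that by simp
      then show ?thesis unfolding l_coset_def using subgroup.one_closed[OF N] by blast
    qed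
    have fib: "{g\<in>carrier G. \<rho> g = l} = l <# N" if l: "l \<in> \<Omega>" for l
    proof safe
      fix g assume gG: "g \<in> carrier G" "l = \<rho> g"
      show "g \<in> \<rho> g <# N" using rho[OF gG(1)] self[OF gG(1)] by simp
    next
      fix g assume g: "g \<in> l <# N"
      have lG: "l \<in> carrier G" using l T(1) by auto
      show gG: "g \<in> carrier G" using l_coset_subset_G[OF NG lG] g by blast
      show "\<rho> g = l" using rho_eq[OF gG l] l_repr_independence[OF g lG N] by simp
    qed
    have cardlN: "card (l <# N) = card N" if "l \<in> carrier G" for l
    proof -
      have "l <# N = (\<lambda>n. l \<otimes> n) ` N" unfolding l_coset_def by auto
      moreover have "inj_on (\<lambda>n. l \<otimes> n) N" using that NG by (intro inj_onI) (metis canc1 subsetD)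
      ultimately show ?thesis by (simp add: card_image)
    qed
    have "(\<Sum>g\<in>carrier G. real (card (S g))) =
          (\<Sum>l\<in>\<Omega>. \<Sum>g\<in>{x\<in>carrier G. \<rho> x = l}. real (card (S g)))"
    proof -
      have "\<rho> ` carrier G \<subseteq> \<Omega>" using rho by blast
      from sum.group[OF fin finO this, of "\<lambda>g. real (card (S g))"] show ?thesis by simp
    qed
    also have "\<dots> = (\<Sum>l\<in>\<Omega>. real (card N) * real (card (S l)))"
    proof (rule sum.cong[OF refl])
      fix l assume l: "l \<in> \<Omega>"
      have lG: "l \<in> carrier G" using l T(1) by auto
      have "(\<Sum>g\<in>l <# N. real (card (S g))) = (\<Sum>g\<in>l <# N. real (card (S l)))"
      proof (rule sum.cong[OF refl])
        fix g assume "g \<in> l <# N"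
        then obtain n where "n \<in> N" "g = l \<otimes> n" unfolding l_coset_def by auto
        then show "real (card (S g)) = real (card (S l))" using S_N lG by simp
      qed
      then show "(\<Sum>g\<in>{x\<in>carrier G. \<rho> x = l}. real (card (S g))) = real (card N) * real (card (S l))"
        using fib[OF l] cardlN[OF lG] by simp
    qed
    finally show ?thesis .
  qed
  also have "(\<Sum>l\<in>\<Omega>. real (card N) * real (card (S l))) / (real (card H) * real (card K)) =
     (\<Sum>l\<in>\<Omega>. (real (card (normalizer G K)) / real (card K)) *
              real (card ((l <# K #> inv l) \<inter> H)) / real (card H))"
    unfolding sum_divide_distrib
  proof (rule sum.cong[OF refl])
    fix l assume l: "l \<in> \<Omega>"
    have lG: "l \<in> carrier G" using l assms(5) unfolding left_transversal_def by auto
    show "real (card N) * real (card (S l)) / (real (card H) * real (card K)) =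
      real (card (normalizer G K)) / real (card K) * real (card ((l <# K #> inv l) \<inter> H)) / real (card H)"
      using S_eq[OF lG] unfolding N_def by simp
  qed
  finally show ?thesis .
qed

end
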